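(* Let $\underline t\in(\mathbb{C}^* )^4$ and let $C_{\underline t}=\{R_{\underline t}=0\}\subset\mathbb{C}^3$. For $\{i,j,k\}=\{1,2,3\}$ let $\gamma_i$ be the automorphism of $C_{\underline t}$ fixing $X_j,X_k$ and sending $X_i\mapsto -X_i+X_jX_k+p_i$. Then the group homomorphism $K\to \mathrm{Aut}(C_{\underline t})$ determined by $g_i\mapsto\gamma_i$ ($i=1,2,3$) is injective.
   Context: For $\underline t=(k_0,k_1,u_0,u_1)$, put $\bar k_i=k_i-k_i^{-1}$, $\bar u_i=u_i-u_i^{-1}$, $p_1=\bar u_0\bar k_0+\bar k_1\bar u_1$, $p_2=\bar u_1\bar u_0+\bar k_0\bar k_1$, $p_3=\bar k_0\bar u_1+\bar k_1\bar u_0$, $p_0=\bar k_0^2+\bar k_1^2+\bar u_0^2+\bar u_1^2-\bar k_0\bar k_1\bar u_0\bar u_1$, and $R_{\underline t}=X_1X_2X_3-X_1^2-X_2^2-X_3^2+p_1X_1+p_2X_2+p_3X_3+p_0+4$. (Thus $\gamma_i$ exchanges the two roots of $R_{\underline t}=0$ viewed as a quadratic equation in $X_i$; each $\gamma_i$ is an involution of $C_{\underline t}$.) $K$ is the kernel of the reduction map $PGL(2,\mathbb{Z})\to PGL(2,\mathbb{Z}/2)$; it is freely generated (as a free product of three groups of order $2$) by the images of the involutions $g_1=\begin{pmatrix}1&0\\0&-1\end{pmatrix}$, $g_2=\begin{pmatrix}1&2\\0&-1\end{pmatrix}$, $g_3=\begin{pmatrix}1&0\\2&-1\end{pmatrix}$.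 *)

theory Defs
  imports "HOL-Analysis.Analysis"
begin

definition bar :: "complex \<Rightarrow> complex" where
  "bar z = z - inverse z"

definition pcoef :: "complex \<times> complex \<times> complex \<times> complex \<Rightarrow> nat \<Rightarrow> complex" where
  "pcoef t i = (case t of (k0,k1,u0,u1) \<Rightarrow>
     (if i = 1 then bar u0 * bar k0 + bar k1 * bar u1
      else if i = 2 then bar u1 * bar u0 + bar k0 * bar k1
      else if i = 3 then bar k0 * bar u1 + bar k1 * bar u0
      else (bar k0)^2 + (bar k1)^2 + (bar u0)^2 + (bar u1)^2
             - bar k0 * bar k1 * bar u0 * bar u1))"

definition Rt :: "complex \<times> complex \<times> complex \<times> complex \<Rightarrow> complex \<times> complex \<times> complex \<Rightarrow> complex" where
  "Rt t X = (case X of (X1,X2,X3) \<Rightarrow>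
     X1*X2*X3 - X1^2 - X2^2 - X3^2 + pcoef t 1 * X1 + pcoef t 2 * X2 + pcoef t 3 * X3
       + pcoef t 0 + 4)"

definition Ct :: "complex \<times> complex \<times> complex \<times> complex \<Rightarrow> (complex \<times> complex \<times> complex) set" where
  "Ct t = {X. Rt t X = 0}"

text \<open>The involutions gamma_i (i = 1,2,3), as maps of C^3 (they preserve C_t).\<close>
definition gam :: "complex \<times> complex \<times> complex \<times> complex \<Rightarrow> nat \<Rightarrow> complex \<times> complex \<times> complex \<Rightarrow> complex \<times> complex \<times> complex" where
  "gam t i X = (case X of (X1,X2,X3) \<Rightarrow>
     (if i = 1 then (- X1 + X2*X3 + pcoef t 1, X2, X3)
      else if i = 2 then (X1, - X2 + X1*X3 + pcoef t 2, X3)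
      else (X1, X2, - X3 + X1*X2 + pcoef t 3)))"

definition gmat :: "nat \<Rightarrow> int^2^2" where
  "gmat i = (if i = 1 then (\<chi> r c. if r = 1 then (if c = 1 then 1 else 0) else (if c = 1 then 0 else -1))
             else if i = 2 then (\<chi> r c. if r = 1 then (if c = 1 then 1 else 2) else (if c = 1 then 0 else -1))
             else (\<chi> r c. if r = 1 then (if c = 1 then 1 else 0) else (if c = 1 then 2 else -1)))"

fun word_mat :: "nat list \<Rightarrow> int^2^2" where
  "word_mat [] = mat 1"
| "word_mat (i # w) = gmat i ** word_mat w"

fun word_gam :: "complex \<times> complex \<times> complex \<times> complex \<Rightarrow> nat list \<Rightarrow> complex \<times> complex \<times> complex \<Rightarrow> complex \<times> complex \<times> complex" where
  "word_gam t [] = id"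
| "word_gam t (i # w) = gam t i \<circ> word_gam t w"

text \<open>Equality in PGL(2,Z) = GL(2,Z)/{1,-1}.\<close>
definition pgl_eq :: "int^2^2 \<Rightarrow> int^2^2 \<Rightarrow> bool" where
  "pgl_eq A B \<longleftrightarrow> A = B \<or> A = - B"

end

theory Submission
  imports Defs
begin

lemma gmat_invol: "gmat i ** gmat i = mat 1"
  unfolding gmat_def
  by (auto simp: vec_eq_iff matrix_matrix_mult_def mat_def sum_2 forall_2)

lemma gmat_invol2: "gmat i ** (gmat i ** A) = A"
  by (simp add: matrix_mul_assoc gmat_invol)

lemma gam_invol: "gam t i (gam t i X) = X"
  by (cases X) (auto simp: gam_def)

fun red :: "nat list \<Rightarrow> nat list" where
  "red [] = []"
| "red (i # w) = (case red w of [] \<Rightarrow> [i] | j # u \<Rightarrow> if i = j then u else i # j # u)"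

fun reduced :: "nat list \<Rightarrow> bool" where
  "reduced (a # b # u) = (a \<noteq> b \<and> reduced (b # u))"
| "reduced _ = True"

lemma reduced_tl: "reduced (a # u) \<Longrightarrow> reduced u"
  by (cases u) auto

lemma red_reduced: "reduced (red w)"
  by (induction w) (auto split: list.split dest: reduced_tl)

lemma red_set: "set (red w) \<subseteq> set w"
  by (induction w) (auto split: list.split)

lemma red_gam: "word_gam t (red w) = word_gam t w"
proof (induction w)
  case (Cons i w)
  then show ?case
    by (cases "red w") (auto simp: fun_eq_iff gam_invol Cons.IH[symmetric])
qed simp

lemma red_mat: "word_mat (red w) = word_mat w"
proof (induction w)
  case (Cons i w)
  then show ?case
    by (cases "red w") (auto simp: gmat_invol2 Cons.IH[symmetric])
qed simp

lemma gam_append: "word_gam t (a @ b) = word_gam t a \<circ> word_gam t b"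
  by (induction a) auto

lemma mat_append: "word_mat (a @ b) = word_mat a ** word_mat b"
  by (induction a) (auto simp: matrix_mul_assoc)

lemma gam_rev: "word_gam t (rev w) (word_gam t w X) = X"
  by (induction w arbitrary: X) (auto simp: gam_append gam_invol)

lemma mat_rev: "word_mat (rev w) ** word_mat w = mat 1"
proof (induction w)
  case (Cons i w)
  have "word_mat (rev (i # w)) ** word_mat (i # w)
      = word_mat (rev w) ** ((gmat i ** mat 1) ** gmat i) ** word_mat w"
    by (simp add: mat_append matrix_mul_assoc)
  also have "\<dots> = mat 1" using Cons by (simp add: gmat_invol)
  finally show ?case .
qed simp

definition cc :: "complex \<times> complex \<times> complex \<Rightarrow> nat \<Rightarrow> complex" where
  "cc X i = (case X of (a,b,c) \<Rightarrow> if i = 1 then a else if i = 2 then b else c)"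

definition PP :: "complex \<times> complex \<times> complex \<times> complex \<Rightarrow> real" where
  "PP t = norm (pcoef t 1) + norm (pcoef t 2) + norm (pcoef t 3)"

definition UU :: "real \<Rightarrow> nat \<Rightarrow> (complex \<times> complex \<times> complex) set" where
  "UU M j = {X. (\<forall>i\<in>{1,2,3}. M \<le> norm (cc X i)) \<and>
                (\<forall>i\<in>{1,2,3}. i \<noteq> j \<longrightarrow> norm (cc X i) < norm (cc X j))}"

lemma key0:
  fixes xi xj xk p :: complex
  assumes "M \<le> norm xj" "M \<le> norm xk" "norm xi < norm xj" "norm p \<le> P" "M = P + 3" "0 \<le> P"
  shows "norm xj < norm (- xi + xj * xk + p)"
proof -
  have "norm xj * norm xk \<le> norm (- xi + xj * xk + p) + norm xi + norm p"
    using norm_triangle_ineq4[of "xj*xk + p - xi" "p - xi"] norm_triangle_ineq4[of p xi]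
    by (simp add: norm_mult algebra_simps)
  moreover have "norm xj * M \<le> norm xj * norm xk"
    using assms by (intro mult_left_mono) auto
  moreover have "norm xj * (P + 1) \<ge> M * (P + 1)"
    using assms by (intro mult_right_mono) auto
  moreover have "M * (P + 1) > P" using assms by (simp add: algebra_simps) (smt (verit) mult_nonneg_nonneg)
  ultimately show ?thesis using assms by (simp add: algebra_simps)
qed

lemma key1:
  fixes xi xj xk p :: complex
  assumes "M \<le> norm xj" "M \<le> norm xk" "norm xi < norm xj" "norm p \<le> P" "M = P + 3" "0 \<le> P"
  shows "norm xj < norm (- xi + xk * xj + p)"
  using key0[OF assms] by (simp add: mult.commute)

lemma ping:
  assumes "i \<in> {1,2,3}" "j \<in> {1,2,3}" "i \<noteq> j" "X \<in> UU (PP t + 3) j"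
  shows "gam t i X \<in> UU (PP t + 3) i"
proof -
  obtain a b c where X: "X = (a,b,c)" by (cases X) auto
  define M where "M = PP t + 3"
  have P0: "0 \<le> PP t" by (simp add: PP_def)
  have n1: "norm (pcoef t 1) \<le> PP t" and n2: "norm (pcoef t 2) \<le> PP t" and n3: "norm (pcoef t 3) \<le> PP t"
    by (auto simp: PP_def)
  have ge: "M \<le> norm a" "M \<le> norm b" "M \<le> norm c"
    using assms(4) by (auto simp: UU_def cc_def X M_def)
  have c12: "gam t 1 X \<in> UU (PP t + 3) 1" if "j = 2"
  proof -
    have "norm a < norm b" "norm c < norm b" using assms(4) that by (auto simp: UU_def cc_def X)
    then show ?thesis
      using key0[of M b c a "pcoef t 1" "PP t"] ge n1 P0
      by (auto simp: UU_def cc_def X gam_def M_def)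
  qed
  have c13: "gam t 1 X \<in> UU (PP t + 3) 1" if "j = 3"
  proof -
    have "norm a < norm c" "norm b < norm c" using assms(4) that by (auto simp: UU_def cc_def X)
    then show ?thesis
      using key1[of M c b a "pcoef t 1" "PP t"] ge n1 P0
      by (auto simp: UU_def cc_def X gam_def M_def)
  qed
  have c21: "gam t 2 X \<in> UU (PP t + 3) 2" if "j = 1"
  proof -
    have "norm b < norm a" "norm c < norm a" using assms(4) that by (auto simp: UU_def cc_def X)
    then show ?thesis
      using key0[of M a c b "pcoef t 2" "PP t"] ge n2 P0
      by (auto simp: UU_def cc_def X gam_def M_def)
  qed
  have c23: "gam t 2 X \<in> UU (PP t + 3) 2" if "j = 3"
  proof -
    have "norm b < norm c" "norm a < norm c" using assms(4) that by (auto simp: UU_def cc_def X)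
    then show ?thesis
      using key1[of M c a b "pcoef t 2" "PP t"] ge n2 P0
      by (auto simp: UU_def cc_def X gam_def M_def)
  qed
  have c31: "gam t 3 X \<in> UU (PP t + 3) 3" if "j = 1"
  proof -
    have "norm c < norm a" "norm b < norm a" using assms(4) that by (auto simp: UU_def cc_def X)
    then show ?thesis
      using key0[of M a b c "pcoef t 3" "PP t"] ge n3 P0
      by (auto simp: UU_def cc_def X gam_def M_def)
  qed
  have c32: "gam t 3 X \<in> UU (PP t + 3) 3" if "j = 2"
  proof -
    have "norm c < norm b" "norm a < norm b" using assms(4) that by (auto simp: UU_def cc_def X)
    then show ?thesis
      using key1[of M b a c "pcoef t 3" "PP t"] ge n3 P0
      by (auto simp: UU_def cc_def X gam_def M_def)
  qed
  show ?thesis using assms(1-3) c12 c13 c21 c23 c31 c32 by auto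
qed

lemma pingpong:
  assumes "reduced v" "v \<noteq> []" "set v \<subseteq> {1,2,3}" "j \<in> {1,2,3}" "j \<noteq> last v"
    "X \<in> UU (PP t + 3) j"
  shows "word_gam t v X \<in> UU (PP t + 3) (hd v)"
  using assms
proof (induction v)
  case (Cons i u)
  show ?case
  proof (cases u)
    case Nil
    then show ?thesis using Cons.prems ping[of i j X t] by auto
  next
    case (Cons b u')
    then have "word_gam t u X \<in> UU (PP t + 3) b"
      using Cons.IH Cons.prems reduced_tl[of i u] by auto
    then show ?thesis using Cons.prems \<open>u = b # u'\<close> ping[of i b _ t] by auto
  qed
qed simp

lemma UU_disj: "X \<in> UU M i \<Longrightarrow> X \<in> UU M j \<Longrightarrow> i \<in> {1,2,3} \<Longrightarrow> j \<in> {1,2,3} \<Longrightarrow> i = j"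
proof (rule ccontr)
  assume a: "X \<in> UU M i" "X \<in> UU M j" "i \<in> {1,2,3}" "j \<in> {1,2,3}" "i \<noteq> j"
  have "norm (cc X j) < norm (cc X i)" using a(1,4,5) unfolding UU_def by auto
  moreover have "norm (cc X i) < norm (cc X j)" using a(2,3,5) unfolding UU_def by auto
  ultimately show False by simp
qed

lemma quad_root:
  fixes s q :: complex
  shows "\<exists>x. x^2 - s*x + q = 0 \<and> norm s \<le> 2 * norm x"
proof -
  define d where "d = csqrt (s^2 - 4*q)"
  have dd: "d^2 = s^2 - 4*q" by (simp add: d_def)
  define r1 where "r1 = (s + d)/2"
  define r2 where "r2 = (s - d)/2"
  have e1: "r1^2 - s*r1 + q = (d^2 - (s^2 - 4*q))/4"
    unfolding r1_def by (simp add: field_simps power2_eq_square)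
  have e2: "r2^2 - s*r2 + q = (d^2 - (s^2 - 4*q))/4"
    unfolding r2_def by (simp add: field_simps power2_eq_square)
  have "r1^2 - s*r1 + q = 0" "r2^2 - s*r2 + q = 0"
    using e1 e2 dd by simp_all
  moreover have "norm s \<le> norm r1 + norm r2"
    using norm_triangle_ineq[of r1 r2] by (simp add: r1_def r2_def add_divide_distrib[symmetric])
  ultimately show ?thesis by (cases "norm r1 \<le> norm r2") force+
qed

lemma big_root:
  fixes p :: complex and P M :: real
  assumes "norm p \<le> P" "M = P + 3" "0 \<le> P" "norm (of_real M ^ 2 + p) \<le> 2 * norm x"
  shows "M < norm x"
proof -
  have "M^2 - P \<le> norm (of_real M ^ 2 + p)"
  proof -
    have "norm (of_real M ^ 2 :: complex) \<le> norm (of_real M ^ 2 + p) + norm p"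
      using norm_triangle_ineq4[of "of_real M ^ 2 + p" p] by simp
    moreover have "norm (of_real M ^ 2 :: complex) = M^2" using assms(2,3) by (simp add: norm_power)
    ultimately show ?thesis using assms(1) by simp
  qed
  moreover have "M * M > 2 * M + P" using assms by (simp add: algebra_simps) (smt (verit) mult_nonneg_nonneg)
  ultimately show ?thesis using assms by (simp add: power2_eq_square)
qed

lemma point_exists:
  assumes "j \<in> {1,2,3}"
  shows "\<exists>X. X \<in> Ct t \<and> X \<in> UU (PP t + 3) j"
proof -
  define M where "M = PP t + 3"
  define N where "N = (of_real M :: complex)"
  have P0: "0 \<le> PP t" by (simp add: PP_def)
  have M0: "M \<ge> 0" using P0 by (simp add: M_def)
  have nN: "norm N = M" using M0 by (simp add: N_def)
  have n1: "norm (pcoef t 1) \<le> PP t" and n2: "norm (pcoef t 2) \<le> PP t" and n3: "norm (pcoef t 3) \<le> PP t"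
    by (auto simp: PP_def)
  consider "j = 1" | "j = 2" | "j = 3" using assms by auto
  then show ?thesis
  proof cases
    case 1
    obtain x where x: "x^2 - (N^2 + pcoef t 1)*x + (2*N^2 - pcoef t 2 * N - pcoef t 3 * N - pcoef t 0 - 4) = 0"
      "norm (N^2 + pcoef t 1) \<le> 2 * norm x" using quad_root by blast
    have "M < norm x" using big_root[of "pcoef t 1" "PP t" M x] x n1 P0 by (simp add: M_def N_def)
    moreover have "Rt t (x, N, N) = 0" using x(1) unfolding Rt_def
      by (simp add: algebra_simps power2_eq_square)
    ultimately show ?thesis using 1 nN
      by (intro exI[of _ "(x,N,N)"]) (auto simp: Ct_def UU_def cc_def M_def)
  next
    case 2
    obtain x where x: "x^2 - (N^2 + pcoef t 2)*x + (2*N^2 - pcoef t 1 * N - pcoef t 3 * N - pcoef t 0 - 4) = 0"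
      "norm (N^2 + pcoef t 2) \<le> 2 * norm x" using quad_root by blast
    have "M < norm x" using big_root[of "pcoef t 2" "PP t" M x] x n2 P0 by (simp add: M_def N_def)
    moreover have "Rt t (N, x, N) = 0" using x(1) unfolding Rt_def
      by (simp add: algebra_simps power2_eq_square)
    ultimately show ?thesis using 2 nN
      by (intro exI[of _ "(N,x,N)"]) (auto simp: Ct_def UU_def cc_def M_def)
  next
    case 3
    obtain x where x: "x^2 - (N^2 + pcoef t 3)*x + (2*N^2 - pcoef t 1 * N - pcoef t 2 * N - pcoef t 0 - 4) = 0"
      "norm (N^2 + pcoef t 3) \<le> 2 * norm x" using quad_root by blast
    have "M < norm x" using big_root[of "pcoef t 3" "PP t" M x] x n3 P0 by (simp add: M_def N_def)
    moreover have "Rt t (N, N, x) = 0" using x(1) unfolding Rt_def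
      by (simp add: algebra_simps power2_eq_square)
    ultimately show ?thesis using 3 nN
      by (intro exI[of _ "(N,N,x)"]) (auto simp: Ct_def UU_def cc_def M_def)
  qed
qed

lemma nontrivial:
  assumes "reduced v" "v \<noteq> []" "set v \<subseteq> {1,2,3}"
  shows "\<exists>X \<in> Ct t. word_gam t v X \<noteq> X"
proof -
  obtain j where j: "j \<in> {1,2,3::nat}" "j \<noteq> hd v" "j \<noteq> last v"
  proof -
    have "\<exists>j\<in>{1,2,3::nat}. j \<noteq> a \<and> j \<noteq> b" for a b :: nat
    proof (cases "a \<noteq> 1 \<and> b \<noteq> 1")
      case False
      then show ?thesis
      proof (cases "a \<noteq> 2 \<and> b \<noteq> 2")
        case False
        then have "3 \<noteq> a \<and> 3 \<noteq> b" using \<open>\<not> (a \<noteq> 1 \<and> b \<noteq> 1)\<close> by linarith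
        then show ?thesis by auto
      qed auto
    qed auto
    then show ?thesis using that by blast
  qed
  obtain X where X: "X \<in> Ct t" "X \<in> UU (PP t + 3) j" using point_exists[OF j(1)] by blast
  have "word_gam t v X \<in> UU (PP t + 3) (hd v)" using pingpong[OF assms j(1) j(3) X(2)] .
  moreover have "hd v \<in> {1,2,3}" using assms(2,3) hd_in_set by blast
  ultimately have "word_gam t v X \<noteq> X" using UU_disj[of X _ j "hd v"] X j by auto
  then show ?thesis using X by blast
qed

theorem corollary2p4:
  fixes k0 k1 u0 u1 :: complex and w w' :: "nat list"
  assumes "k0 \<noteq> 0" "k1 \<noteq> 0" "u0 \<noteq> 0" "u1 \<noteq> 0"
    and "set w \<subseteq> {1,2,3}" "set w' \<subseteq> {1,2,3}"
    and "\<forall>X \<in> Ct (k0,k1,u0,u1). word_gam (k0,k1,u0,u1) w X = word_gam (k0,k1,u0,u1) w' X"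
  shows "pgl_eq (word_mat w) (word_mat w')"
proof -
  define t where "t = (k0,k1,u0,u1)"
  define v where "v = red (rev w' @ w)"
  have fx: "word_gam t v X = X" if "X \<in> Ct t" for X
  proof -
    have "word_gam t v X = word_gam t (rev w') (word_gam t w X)"
      by (simp add: v_def red_gam gam_append)
    also have "\<dots> = word_gam t (rev w') (word_gam t w' X)" using assms(7) that by (simp add: t_def)
    also have "\<dots> = X" by (rule gam_rev)
    finally show ?thesis .
  qed
  have "set v \<subseteq> {1,2,3}" using red_set[of "rev w' @ w"] assms(5,6) by (auto simp: v_def)
  then have "v = []" using nontrivial[of v t] red_reduced fx by (auto simp: v_def)
  then have "word_mat (rev w') ** word_mat w = mat 1"
    using red_mat[of "rev w' @ w"] by (simp add: v_def mat_append)
  then have "word_mat w' ** (word_mat (rev w') ** word_mat w) = word_mat w'" by simp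
  moreover have "word_mat w' ** word_mat (rev w') = mat 1" using mat_rev[of "rev w'"] by simp
  ultimately have "word_mat w = word_mat w'" by (simp add: matrix_mul_assoc)
  then show ?thesis by (simp add: pgl_eq_def)
qed

end
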